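(* Let $(M,\rho)$ be a metric space and $f:[a,b]\to M$. If $md(f,x)$ exists for every $x\in[a,b]$ and $x\mapsto md(f,x)$ is Lebesgue integrable on $[a,b]$, then $f$ is absolutely continuous on $[a,b]$.
   Context: $md(f,x)=\lim_{t\to0,\ x+t\in[a,b]}\rho(f(x+t),f(x))/|t|$ when it exists (finite). Absolute continuity of $f$: for every $\varepsilon>0$ there is $\delta>0$ such that for non-overlapping intervals $[a_i,b_i]\subset[a,b]$ with $\sum_i(b_i-a_i)<\delta$ one has $\sum_i\rho(f(b_i),f(a_i))<\varepsilon$. *)

theory Defs
  imports "HOL-Analysis.Analysis"
begin

definition md_quot :: "(real \<Rightarrow> 'm::metric_space) \<Rightarrow> real \<Rightarrow> real \<Rightarrow> real" where
  "md_quot f x t = dist (f (x + t)) (f x) / \<bar>t\<bar>"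

definition md_exists :: "(real \<Rightarrow> 'm::metric_space) \<Rightarrow> real \<Rightarrow> real \<Rightarrow> real \<Rightarrow> bool" where
  "md_exists f a b x \<longleftrightarrow>
     (\<exists>L. (md_quot f x \<longlongrightarrow> L) (at 0 within {t. x + t \<in> {a..b}}))"

text \<open>The value md(f,x) (meaningful when it exists).\<close>
definition md :: "(real \<Rightarrow> 'm::metric_space) \<Rightarrow> real \<Rightarrow> real \<Rightarrow> real \<Rightarrow> real" where
  "md f a b x = Lim (at 0 within {t. x + t \<in> {a..b}}) (md_quot f x)"

definition abs_cont_metric :: "(real \<Rightarrow> 'm::metric_space) \<Rightarrow> real \<Rightarrow> real \<Rightarrow> bool" where
  "abs_cont_metric f a b \<longleftrightarrow>
     (\<forall>\<epsilon>>0. \<exists>\<delta>>0. \<forall>(n::nat) (aa::nat \<Rightarrow> real) bb.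
        (\<forall>i<n. a \<le> aa i \<and> aa i \<le> bb i \<and> bb i \<le> b) \<and>
        (\<forall>i<n. \<forall>j<n. i \<noteq> j \<longrightarrow> bb i \<le> aa j \<or> bb j \<le> aa i) \<and>
        (\<Sum>i<n. bb i - aa i) < \<delta>
        \<longrightarrow> (\<Sum>i<n. dist (f (bb i)) (f (aa i))) < \<epsilon>)"

end

theory Submission
  imports Defs
begin

lemma md_props:
  fixes f :: "real \<Rightarrow> 'm::metric_space"
  assumes ab: "a < b" and x: "x \<in> {a..b}" and ex: "md_exists f a b x"
  shows "md f a b x \<ge> 0"
    and "e > 0 \<Longrightarrow> \<exists>r>0. \<forall>y\<in>{a..b}. \<bar>y - x\<bar> < r \<longrightarrow> dist (f y) (f x) \<le> (md f a b x + e) * \<bar>y - x\<bar>"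
proof -
  define S where "S = {t. x + t \<in> {a..b}}"
  obtain L where L: "(md_quot f x \<longlongrightarrow> L) (at 0 within S)"
    using ex unfolding md_exists_def S_def by blast
  have S_eq: "S = {a - x..b - x}" unfolding S_def by auto
  have "0 islimpt S" unfolding S_eq using islimpt_Icc[of "a-x" "b-x" 0] ab x by simp
  then have nb: "\<not> trivial_limit (at 0 within S)" by (simp add: trivial_limit_within)
  have mdL: "md f a b x = L" unfolding md_def S_def[symmetric] using tendsto_Lim[OF nb L] .
  show "md f a b x \<ge> 0" unfolding mdL
    by (rule tendsto_lowerbound[OF L _ nb]) (auto simp: md_quot_def)
  assume e: "e > 0"
  have "eventually (\<lambda>t. md_quot f x t < L + e) (at 0 within S)"
    using order_tendstoD(2)[OF L] e by simp
  then obtain r where r: "r > 0" "\<And>t. t \<in> S \<Longrightarrow> t \<noteq> 0 \<Longrightarrow> dist t 0 < r \<Longrightarrow> md_quot f x t < L + e"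
    unfolding eventually_at by auto
  show "\<exists>r>0. \<forall>y\<in>{a..b}. \<bar>y - x\<bar> < r \<longrightarrow> dist (f y) (f x) \<le> (md f a b x + e) * \<bar>y - x\<bar>"
  proof (intro exI[of _ r] conjI ballI impI)
    fix y assume y: "y \<in> {a..b}" "\<bar>y - x\<bar> < r"
    show "dist (f y) (f x) \<le> (md f a b x + e) * \<bar>y - x\<bar>"
    proof (cases "y = x")
      case False
      have "md_quot f x (y - x) < L + e"
        using r(2)[of "y - x"] y False unfolding S_def by auto
      then have "dist (f y) (f x) / \<bar>y - x\<bar> < L + e" by (simp add: md_quot_def)
      then show ?thesis using False unfolding mdL by (simp add: divide_less_eq mult.commute)
    qed simp
  qed (use r in auto)
qed

lemma dist_le_integral:
  fixes f :: "real \<Rightarrow> 'm::metric_space"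
  assumes ab: "a < b" and ex: "\<forall>x\<in>{a..b}. md_exists f a b x"
    and int: "(md f a b) integrable_on {c..d}" and cd: "a \<le> c" "c \<le> d" "d \<le> b"
  shows "dist (f d) (f c) \<le> integral {c..d} (md f a b)"
proof -
  define m where "m = md f a b"
  define I where "I = integral {c..d} m"
  have hI: "(m has_integral I) {c..d}" using int unfolding I_def m_def by blast
  have key: "dist (f d) (f c) \<le> I + e * (1 + (d - c))" if e: "e > 0" for e
  proof -
    obtain \<gamma>1 where g1: "gauge \<gamma>1"
      and g1D: "\<And>D. D tagged_division_of {c..d} \<Longrightarrow> \<gamma>1 fine D \<Longrightarrow>
                 norm ((\<Sum>(x,K)\<in>D. Henstock_Kurzweil_Integration.content K *\<^sub>R m x) - I) < e"
      using hI e unfolding has_integral_real by meson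
    define P where "P x r \<longleftrightarrow> r > 0 \<and> (\<forall>y\<in>{a..b}. \<bar>y - x\<bar> < r \<longrightarrow> dist (f y) (f x) \<le> (m x + e) * \<bar>y - x\<bar>)" for x r
    define r where "r x = (SOME r. P x r)" for x
    have r: "P x (r x)" if "x \<in> {a..b}" for x
      unfolding r_def
      by (rule someI_ex) (use md_props(2)[OF ab that ex[rule_format, OF that] e] in \<open>auto simp: P_def m_def\<close>)
    define \<gamma>2 where "\<gamma>2 x = (if x \<in> {a..b} then ball x (r x) else ball x 1)" for x
    have g2: "gauge \<gamma>2" unfolding gauge_def \<gamma>2_def using r by (auto simp: P_def)
    obtain D where D: "D tagged_division_of {c..d}" and fD: "(\<lambda>x. \<gamma>1 x \<inter> \<gamma>2 x) fine D"
      using fine_division_exists_real[OF gauge_Int[OF g1 g2]] by blast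
    have f1: "\<gamma>1 fine D" and f2: "\<gamma>2 fine D" using fD by (auto simp: fine_Int)
    define \<phi> where "\<phi> y = dist (f y) (f c)" for y
    have "dist (f d) (f c) = \<phi> d - \<phi> c" by (simp add: \<phi>_def)
    also have "\<dots> = (\<Sum>(x,K)\<in>D. \<phi> (Sup K) - \<phi> (Inf K))"
      using additive_tagged_division_1[OF cd(2) D, of \<phi>] by simp
    also have "\<dots> \<le> (\<Sum>(x,K)\<in>D. Henstock_Kurzweil_Integration.content K *\<^sub>R m x + e * Henstock_Kurzweil_Integration.content K)"
    proof (rule sum_mono, clarify)
      fix x K assume xK: "(x, K) \<in> D"
      have xK1: "x \<in> K" "K \<subseteq> {c..d}" using D xK by blast+
      obtain u v where K: "K = {u..v}" using tagged_division_ofD(4)[OF D xK] by (auto simp: box_real)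
      have uv: "u \<le> v" using xK1 K by auto
      have xab: "x \<in> {a..b}" using xK1 cd by auto
      have Kb: "K \<subseteq> ball x (r x)" using f2 xK xab unfolding fine_def \<gamma>2_def by fastforce
      have ux: "u \<le> x" "x \<le> v" using xK1 K by auto
      have uvab: "u \<in> {a..b}" "v \<in> {a..b}" using xK1 K uv cd by auto
      have du: "\<bar>u - x\<bar> < r x" "\<bar>v - x\<bar> < r x" using Kb K uv by (auto simp: dist_real_def)
      have Pr: "P x (r x)" using r xab .
      have h1': "dist (f u) (f x) \<le> (m x + e) * \<bar>u - x\<bar>"
        using Pr uvab(1) du(1) unfolding P_def by blast
      have h2': "dist (f v) (f x) \<le> (m x + e) * \<bar>v - x\<bar>"
        using Pr uvab(2) du(2) unfolding P_def by blast
      have h1: "dist (f u) (f x) \<le> (m x + e) * (x - u)"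
      proof -
        have "\<bar>u - x\<bar> = x - u" using ux by simp
        then show ?thesis using h1' by simp
      qed
      have h2: "dist (f v) (f x) \<le> (m x + e) * (v - x)"
      proof -
        have "\<bar>v - x\<bar> = v - x" using ux by simp
        then show ?thesis using h2' by simp
      qed
      have "\<phi> v - \<phi> u \<le> dist (f v) (f u)"
        unfolding \<phi>_def using dist_triangle[of "f v" "f c" "f u"] by linarith
      also have "\<dots> \<le> dist (f v) (f x) + dist (f u) (f x)"
        using dist_triangle[of "f v" "f u" "f x"] by (simp add: dist_commute)
      also have "\<dots> \<le> (m x + e) * (v - u)" using h1 h2 by (simp add: algebra_simps)
      finally have "\<phi> v - \<phi> u \<le> (m x + e) * (v - u)" .
      then show "\<phi> (Sup K) - \<phi> (Inf K) \<le> Henstock_Kurzweil_Integration.content K *\<^sub>R m x + e * Henstock_Kurzweil_Integration.content K"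
        using uv unfolding K by (simp add: algebra_simps)
    qed
    also have "\<dots> = (\<Sum>(x,K)\<in>D. Henstock_Kurzweil_Integration.content K *\<^sub>R m x) + e * (\<Sum>(x,K)\<in>D. Henstock_Kurzweil_Integration.content K)"
      by (simp add: sum.distrib sum_distrib_left case_prod_unfold)
    also have "(\<Sum>(x,K)\<in>D. Henstock_Kurzweil_Integration.content K) = d - c"
      using additive_content_tagged_division[of D c d] D cd by (simp add: box_real)
    also have "(\<Sum>(x,K)\<in>D. Henstock_Kurzweil_Integration.content K *\<^sub>R m x) \<le> I + e"
      using g1D[OF D f1] by (simp add: abs_diff_less_iff)
    finally show ?thesis by (simp add: algebra_simps)
  qed
  show ?thesis unfolding I_def[symmetric] m_def[symmetric]
  proof (rule field_le_epsilon)
    fix e :: real assume e: "e > 0"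
    have p: "1 + (d - c) > 0" using cd by simp
    have "dist (f d) (f c) \<le> I + (e / (1 + (d - c))) * (1 + (d - c))"
      using key[of "e / (1 + (d - c))"] e p by simp
    then show "dist (f d) (f c) \<le> I + e" using p by simp
  qed
qed


lemma sum_integral_le:
  fixes h :: "real \<Rightarrow> real" and n :: nat
  assumes hint: "h integrable_on {a..b}" and hpos: "\<forall>x\<in>{a..b}. 0 \<le> h x"
    and sub: "\<forall>i<n. a \<le> aa i \<and> aa i \<le> bb i \<and> bb i \<le> b"
    and disj: "\<forall>i<n. \<forall>j<n. i \<noteq> j \<longrightarrow> bb i \<le> aa j \<or> bb j \<le> aa i"
  shows "(\<Sum>i<n. integral {aa i..bb i} h) \<le> integral {a..b} h"
proof -
  have int_i: "h integrable_on {aa i..bb i}" if "i < n" for i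
    using integrable_on_subinterval[OF hint] sub that by auto
  have neg: "pairwise (\<lambda>i j. negligible ({aa i..bb i} \<inter> {aa j..bb j})) {..<n}"
    unfolding pairwise_def
  proof (intro ballI impI)
    fix i j assume ij: "i \<in> {..<n}" "j \<in> {..<n}" "i \<noteq> j"
    then have "bb i \<le> aa j \<or> bb j \<le> aa i" using disj by auto
    then show "negligible ({aa i..bb i} \<inter> {aa j..bb j})"
    proof
      assume "bb i \<le> aa j"
      then have "{aa i..bb i} \<inter> {aa j..bb j} \<subseteq> {bb i}" by auto
      then show ?thesis using negligible_subset[OF negligible_sing] by blast
    next
      assume "bb j \<le> aa i"
      then have "{aa i..bb i} \<inter> {aa j..bb j} \<subseteq> {bb j}" by auto
      then show ?thesis using negligible_subset[OF negligible_sing] by blast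
    qed
  qed
  have U: "(h has_integral (\<Sum>i<n. integral {aa i..bb i} h)) (\<Union>i<n. {aa i..bb i})"
    by (rule has_integral_UN[OF finite_lessThan _ neg]) (use int_i in auto)
  have "(\<Sum>i<n. integral {aa i..bb i} h) = integral (\<Union>i<n. {aa i..bb i}) h"
    using U by (simp add: integral_unique)
  also have "\<dots> \<le> integral {a..b} h"
    by (rule integral_subset_le) (use U sub hint hpos in auto)
  finally show ?thesis .
qed

theorem theorem3p8:
  fixes f :: "real \<Rightarrow> 'm::metric_space" and a b :: real
  assumes "\<forall>x\<in>{a..b}. md_exists f a b x"
    and "integrable (lebesgue_on {a..b}) (md f a b)"
  shows "abs_cont_metric f a b"
proof (cases "a < b")
  case False
  show ?thesis unfolding abs_cont_metric_def
  proof (intro allI impI exI[of _ 1] conjI)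
    fix \<epsilon> :: real and n aa bb assume e: "\<epsilon> > 0" and
      H: "(\<forall>i<n. a \<le> aa i \<and> aa i \<le> bb i \<and> bb i \<le> b) \<and>
        (\<forall>i<n. \<forall>j<n. i \<noteq> j \<longrightarrow> bb i \<le> aa j \<or> bb j \<le> aa i) \<and> (\<Sum>i<n. bb i - aa i) < 1"
    have "\<forall>i<n. bb i = aa i"
    proof (intro allI impI)
      fix i assume "i < n"
      then have "a \<le> aa i \<and> aa i \<le> bb i \<and> bb i \<le> b" using H by blast
      then show "bb i = aa i" using False by linarith
    qed
    then have "(\<Sum>i<n. dist (f (bb i)) (f (aa i))) = 0" by simp
    then show "(\<Sum>i<n. dist (f (bb i)) (f (aa i))) < \<epsilon>" using e by simp
  qed simp
next
  case ab: True
  define m where "m = md f a b"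
  have mpos: "\<And>x. x \<in> {a..b} \<Longrightarrow> 0 \<le> m x"
    unfolding m_def using md_props(1)[OF ab] assms(1) by blast
  have mint: "m integrable_on {a..b}"
    unfolding m_def by (rule integrable_on_lebesgue_on[OF assms(2)]) simp
  have mabs: "m absolutely_integrable_on {a..b}"
    by (rule nonnegative_absolutely_integrable_1[OF mint mpos])
  define g where "g k x = min (m x) (real k)" for k x
  have gint: "g k integrable_on {a..b}" for k
  proof -
    have "(\<lambda>x. real k) absolutely_integrable_on {a..b}"
      by (rule nonnegative_absolutely_integrable_1) auto
    then have "g k absolutely_integrable_on {a..b}"
      unfolding g_def by (rule absolutely_integrable_min_1[OF mabs])
    then show ?thesis by (rule set_lebesgue_integral_eq_integral)
  qed
  have conv: "(\<lambda>k. integral {a..b} (g k)) \<longlonglongrightarrow> integral {a..b} m"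
  proof (rule dominated_convergence(2)[OF gint mint])
    fix k x assume x: "x \<in> {a..b}"
    show "norm (g k x) \<le> m x" using mpos[OF x] by (auto simp: g_def)
  next
    fix x assume x: "x \<in> {a..b}"
    obtain K where K: "m x \<le> real K" using real_arch_simple by blast
    have "\<forall>k\<ge>K. g k x = m x" using K by (auto simp: g_def)
    then show "(\<lambda>k. g k x) \<longlonglongrightarrow> m x"
      by (intro tendsto_eventually eventually_sequentiallyI[of K]) (use K in \<open>auto simp: g_def\<close>)
  qed
  show ?thesis unfolding abs_cont_metric_def
  proof (intro allI impI)
    fix \<epsilon> :: real assume e: "\<epsilon> > 0"
    obtain N where N: "dist (integral {a..b} (g N)) (integral {a..b} m) < \<epsilon> / 2"
      using conv e unfolding lim_sequentially by (metis half_gt_zero order_refl)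
    define \<delta> where "\<delta> = \<epsilon> / (2 * (real N + 1))"
    have d: "\<delta> > 0" using e by (simp add: \<delta>_def)
    show "\<exists>\<delta>>0. \<forall>(n::nat) (aa::nat \<Rightarrow> real) bb.
        (\<forall>i<n. a \<le> aa i \<and> aa i \<le> bb i \<and> bb i \<le> b) \<and>
        (\<forall>i<n. \<forall>j<n. i \<noteq> j \<longrightarrow> bb i \<le> aa j \<or> bb j \<le> aa i) \<and>
        (\<Sum>i<n. bb i - aa i) < \<delta>
        \<longrightarrow> (\<Sum>i<n. dist (f (bb i)) (f (aa i))) < \<epsilon>"
    proof (intro exI[of _ \<delta>] conjI d allI impI, elim conjE)
      fix n :: nat and aa bb :: "nat \<Rightarrow> real"
      assume sub: "\<forall>i<n. a \<le> aa i \<and> aa i \<le> bb i \<and> bb i \<le> b"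
        and disj: "\<forall>i<n. \<forall>j<n. i \<noteq> j \<longrightarrow> bb i \<le> aa j \<or> bb j \<le> aa i"
        and len: "(\<Sum>i<n. bb i - aa i) < \<delta>"
      define h where "h x = m x - g N x" for x
      have hint: "h integrable_on {a..b}" unfolding h_def by (rule integrable_diff[OF mint gint])
      have hpos: "\<forall>x\<in>{a..b}. 0 \<le> h x" by (auto simp: h_def g_def)
      have step: "dist (f (bb i)) (f (aa i)) \<le> real N * (bb i - aa i) + integral {aa i..bb i} h"
        if i: "i < n" for i
      proof -
        have s: "{aa i..bb i} \<subseteq> {a..b}" using sub i by auto
        have mi: "m integrable_on {aa i..bb i}" by (rule integrable_on_subinterval[OF mint s])
        have gi: "g N integrable_on {aa i..bb i}" by (rule integrable_on_subinterval[OF gint s])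
        have "dist (f (bb i)) (f (aa i)) \<le> integral {aa i..bb i} m"
          using dist_le_integral[OF ab assms(1), of "aa i" "bb i"] mi sub i unfolding m_def by auto
        also have "\<dots> = integral {aa i..bb i} (g N) + integral {aa i..bb i} h"
          unfolding h_def using integral_diff[OF mi gi] by simp
        also have "integral {aa i..bb i} (g N) \<le> integral {aa i..bb i} (\<lambda>x. real N)"
          by (rule integral_le[OF gi]) (auto simp: g_def)
        also have "\<dots> = real N * (bb i - aa i)" using sub i by simp
        finally show ?thesis by simp
      qed
      have "(\<Sum>i<n. dist (f (bb i)) (f (aa i))) \<le> (\<Sum>i<n. real N * (bb i - aa i) + integral {aa i..bb i} h)"
        by (rule sum_mono) (use step in auto)
      also have "\<dots> = real N * (\<Sum>i<n. bb i - aa i) + (\<Sum>i<n. integral {aa i..bb i} h)"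
        by (simp add: sum.distrib sum_distrib_left)
      also have "(\<Sum>i<n. integral {aa i..bb i} h) \<le> integral {a..b} h"
        by (rule sum_integral_le[OF hint hpos sub disj])
      also have "integral {a..b} h = integral {a..b} m - integral {a..b} (g N)"
        unfolding h_def by (rule integral_diff[OF mint gint])
      also have "\<dots> < \<epsilon> / 2" using N unfolding dist_real_def by linarith
      also have "real N * (\<Sum>i<n. bb i - aa i) \<le> real N * \<delta>"
        using len by (intro mult_left_mono) auto
      also have "real N * \<delta> < \<epsilon> / 2"
      proof -
        have "real N * \<delta> = \<epsilon> / 2 * (real N / (real N + 1))" by (simp add: \<delta>_def field_simps)
        also have "\<dots> < \<epsilon> / 2 * 1" using e by (intro mult_strict_left_mono) auto
        finally show ?thesis by simp
      qed
      finally show "(\<Sum>i<n. dist (f (bb i)) (f (aa i))) < \<epsilon>" by simp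
    qed
  qed
qed

end
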